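(* Let $\pi^m_{k+1}(\cdot|s,\mathbf{a}^{1:m-1})\propto\exp\{\beta_k^{-1}Q^{1:m}_{\boldsymbol{\pi}_{\theta_k}}(s,\mathbf{a}^{1:m-1},\cdot)+\phi^\top(s,\mathbf{a}^{1:m-1},\cdot)\theta_k^m\}$ be the ideal update, $\pi_{\theta^m_{k+1}}$ the log-linear policy with parameter $\theta^m_{k+1}$, and $\pi_{\theta^m_k}$ the current log-linear policy. Then for any $(s,\mathbf{a}^{1:m-1})\in\mathcal{S}\times\mathcal{A}^{m-1}$ (suppressed from notation below), $$ \begin{aligned} &\mathrm{KL}(\pi_*^m\|\pi_{\theta^m_{k+1}})-\mathrm{KL}(\pi_*^m\|\pi_{\theta^m_k})\\ &\le\Big\langle\log\frac{\pi_{\theta^m_{k+1}}}{\pi^m_{k+1}},\ \pi_{\theta^m_k}-\pi_*^m\Big\rangle+\frac{1}{\beta_k}\big\langle A^m_{\boldsymbol{\pi}_{\theta_k}}(s,\mathbf{a}^{1:m-1},\cdot),\ \pi_{\theta^m_k}-\pi_*^m\big\rangle-\frac12\big\|\pi_{\theta^m_{k+1}}-\pi_{\theta^m_k}\big\|_1^2\\ &\quad-\big\langle(\theta^m_{k+1}-\theta^m_k)^\top\phi(s,\mathbf{a}^{1:m-1},\cdot),\ \pi_{\theta^m_k}-\pi_{\theta^m_{k+1}}\big\rangle. \end{aligned} $$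
   Context: Fully cooperative Markov game with agents $\{1,\dots,N\}$, finite state space $\mathcal{S}$, finite individual action space $\mathcal{A}$. Joint policies in sequential conditional form $\boldsymbol{\pi}(\mathbf{a}|s)=\prod_m\pi^m(a^m|s,\mathbf{a}^{1:m-1})$. $Q^{1:m}_{\boldsymbol{\pi}}(s,\mathbf{a}^{1:m})$ is the expected joint action-value given $\mathbf{a}^{1:m}$ when the remaining agents follow $\boldsymbol{\pi}$, and the multi-agent advantage of agent $m$ is $A^m_{\boldsymbol{\pi}}(s,\mathbf{a}^{1:m-1},a^m)=Q^{1:m}_{\boldsymbol{\pi}}(s,\mathbf{a}^{1:m})-Q^{1:m-1}_{\boldsymbol{\pi}}(s,\mathbf{a}^{1:m-1})$. Log-linear policies $\pi_{\theta^m}(a^m|s,\mathbf{a}^{1:m-1})\propto\exp(\phi^\top(s,\mathbf{a}^{1:m-1},a^m)\theta^m)$. $\boldsymbol{\pi}_{\theta_k}$ is the current joint policy with parameters $\theta_k^1,\dots,\theta_k^N$; $\theta^m_{k+1}\in\mathbb{R}^d$ arbitrary; $\beta_k>0$; $\pi_*^m$ is agent $m$'s conditional policy in an optimal joint policy $\boldsymbol{\pi}_*$. $\langle\cdot,\cdot\rangle$ is the inner product over $\mathcal{A}$ and $\mathrm{KL}$ the Kullback–Leibler divergence. *)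

theory Defs
  imports "HOL-Analysis.Analysis"
begin

text \<open>Joint actions are lists of length N; the action of
agent j is at list position j-1.\<close>

record ('s, 'a) mgame =
  trans :: "'s \<Rightarrow> 'a list \<Rightarrow> 's \<Rightarrow> real"
  rew   :: "'s \<Rightarrow> 'a list \<Rightarrow> real"
  disc  :: real

definition valid_game :: "nat \<Rightarrow> ('s::finite, 'a::finite) mgame \<Rightarrow> bool" where
  "valid_game N G \<longleftrightarrow> 0 \<le> disc G \<and> disc G < 1 \<and>
     (\<forall>s as s'. 0 \<le> trans G s as s') \<and>
     (\<forall>s as. length as = N \<longrightarrow> (\<Sum>s'\<in>UNIV. trans G s as s') = 1)"

text \<open>A joint policy in sequential conditional form: pol j s pre a = pi^j(a | s, a^{1:j-1}),
where pre = a^{1:j-1} is a list of length j-1.\<close>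
type_synonym ('s, 'a) jpolicy = "nat \<Rightarrow> 's \<Rightarrow> 'a list \<Rightarrow> 'a \<Rightarrow> real"

definition is_dist :: "('a::finite \<Rightarrow> real) \<Rightarrow> bool" where
  "is_dist p \<longleftrightarrow> (\<forall>a. 0 \<le> p a) \<and> (\<Sum>a\<in>UNIV. p a) = 1"

definition is_jpolicy :: "nat \<Rightarrow> ('s, 'a::finite) jpolicy \<Rightarrow> bool" where
  "is_jpolicy N pol \<longleftrightarrow> (\<forall>j s pre. 1 \<le> j \<and> j \<le> N \<and> length pre = j - 1 \<longrightarrow> is_dist (pol j s pre))"

text \<open>Probability of agents k+1..N choosing the continuation making up the full joint action as
(given the first k actions take k as).\<close>
definition cond_prob :: "nat \<Rightarrow> ('s, 'a) jpolicy \<Rightarrow> nat \<Rightarrow> 's \<Rightarrow> 'a list \<Rightarrow> real" where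
  "cond_prob N pol k s as = (\<Prod>j\<in>{k+1..N}. pol j s (take (j - 1) as) (as ! (j - 1)))"

definition jprob :: "nat \<Rightarrow> ('s, 'a) jpolicy \<Rightarrow> 's \<Rightarrow> 'a list \<Rightarrow> real" where
  "jprob N pol s as = cond_prob N pol 0 s as"

definition jactions :: "nat \<Rightarrow> 'a list set" where
  "jactions N = {as. length as = N}"

definition Ppi :: "nat \<Rightarrow> ('s::finite, 'a::finite) mgame \<Rightarrow> ('s, 'a) jpolicy \<Rightarrow> 's \<Rightarrow> 's \<Rightarrow> real" where
  "Ppi N G pol s s' = (\<Sum>as\<in>jactions N. jprob N pol s as * trans G s as s')"

definition rpi :: "nat \<Rightarrow> ('s::finite, 'a::finite) mgame \<Rightarrow> ('s, 'a) jpolicy \<Rightarrow> 's \<Rightarrow> real" where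
  "rpi N G pol s = (\<Sum>as\<in>jactions N. jprob N pol s as * rew G s as)"

fun step_rew :: "nat \<Rightarrow> ('s::finite, 'a::finite) mgame \<Rightarrow> ('s, 'a) jpolicy \<Rightarrow> nat \<Rightarrow> 's \<Rightarrow> real" where
  "step_rew N G pol 0 s = rpi N G pol s"
| "step_rew N G pol (Suc t) s = (\<Sum>s'\<in>UNIV. Ppi N G pol s s' * step_rew N G pol t s')"

definition Vfun :: "nat \<Rightarrow> ('s::finite, 'a::finite) mgame \<Rightarrow> ('s, 'a) jpolicy \<Rightarrow> 's \<Rightarrow> real" where
  "Vfun N G pol s = (\<Sum>t. disc G ^ t * step_rew N G pol t s)"

definition Qfun :: "nat \<Rightarrow> ('s::finite, 'a::finite) mgame \<Rightarrow> ('s, 'a) jpolicy \<Rightarrow> 's \<Rightarrow> 'a list \<Rightarrow> real" where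
  "Qfun N G pol s as = rew G s as + disc G * (\<Sum>s'\<in>UNIV. trans G s as s' * Vfun N G pol s')"

text \<open>Q^{1:k}_pi(s, a^{1:k}) for a prefix pre of length k: expected joint action value when the
remaining agents k+1..N follow pol.\<close>
definition Qpre :: "nat \<Rightarrow> ('s::finite, 'a::finite) mgame \<Rightarrow> ('s, 'a) jpolicy \<Rightarrow> 's \<Rightarrow> 'a list \<Rightarrow> real" where
  "Qpre N G pol s pre =
     (\<Sum>rest\<in>jactions (N - length pre).
        cond_prob N pol (length pre) s (pre @ rest) * Qfun N G pol s (pre @ rest))"

text \<open>Multi-agent advantage A^m_pi(s, a^{1:m-1}, a^m) (m = length pre + 1).\<close>
definition Adv :: "nat \<Rightarrow> ('s::finite, 'a::finite) mgame \<Rightarrow> ('s, 'a) jpolicy \<Rightarrow> 's \<Rightarrow> 'a list \<Rightarrow> 'a \<Rightarrow> real" where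
  "Adv N G pol s pre a = Qpre N G pol s (pre @ [a]) - Qpre N G pol s pre"

definition optimal_jpolicy :: "nat \<Rightarrow> ('s::finite, 'a::finite) mgame \<Rightarrow> ('s, 'a) jpolicy \<Rightarrow> bool" where
  "optimal_jpolicy N G pstar \<longleftrightarrow> is_jpolicy N pstar \<and>
     (\<forall>pol s. is_jpolicy N pol \<longrightarrow> Vfun N G pol s \<le> Vfun N G pstar s)"

definition loglin :: "('s \<Rightarrow> 'a list \<Rightarrow> 'a::finite \<Rightarrow> real^'d) \<Rightarrow> real^'d \<Rightarrow> 's \<Rightarrow> 'a list \<Rightarrow> 'a \<Rightarrow> real" where
  "loglin phi theta s pre a =
     exp (phi s pre a \<bullet> theta) / (\<Sum>b\<in>UNIV. exp (phi s pre b \<bullet> theta))"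

definition loglin_joint :: "('s \<Rightarrow> 'a list \<Rightarrow> 'a::finite \<Rightarrow> real^'d) \<Rightarrow> (nat \<Rightarrow> real^'d) \<Rightarrow> ('s, 'a) jpolicy" where
  "loglin_joint phi theta = (\<lambda>j. loglin phi (theta j))"

definition ideal_update ::
  "nat \<Rightarrow> ('s::finite, 'a::finite) mgame \<Rightarrow> ('s \<Rightarrow> 'a list \<Rightarrow> 'a \<Rightarrow> real^'d) \<Rightarrow> (nat \<Rightarrow> real^'d) \<Rightarrow> real
     \<Rightarrow> nat \<Rightarrow> 's \<Rightarrow> 'a list \<Rightarrow> 'a \<Rightarrow> real" where
  "ideal_update N G phi theta beta m s pre a =
     (let f = (\<lambda>b. exp (Qpre N G (loglin_joint phi theta) s (pre @ [b]) / beta + phi s pre b \<bullet> theta m))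
      in f a / (\<Sum>b\<in>UNIV. f b))"

definition KL :: "('a::finite \<Rightarrow> real) \<Rightarrow> ('a \<Rightarrow> real) \<Rightarrow> real" where
  "KL p q = (\<Sum>a\<in>UNIV. if p a = 0 then 0 else p a * ln (p a / q a))"

definition ip :: "('a::finite \<Rightarrow> real) \<Rightarrow> ('a \<Rightarrow> real) \<Rightarrow> real" where
  "ip f g = (\<Sum>a\<in>UNIV. f a * g a)"

definition norm1 :: "('a::finite \<Rightarrow> real) \<Rightarrow> real" where
  "norm1 f = (\<Sum>a\<in>UNIV. \<bar>f a\<bar>)"

end

theory Submission imports Defs begin
lemma h_mono:
  fixes a b :: real assumes "0 < a" "a \<le> b"
  shows "(a+1)*ln a - 2*(a-1) \<le> (b+1)*ln b - 2*(b-1)"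
proof (rule deriv_nonneg_imp_mono[where g="\<lambda>x. (x+1)*ln x - 2*(x-1)" and g'="\<lambda>x. ln x + (x+1)/x - 2"])
  fix x assume x: "x \<in> {a..b}"
  hence xp: "x > 0" using assms by auto
  show "((\<lambda>x. (x+1)*ln x - 2*(x-1)) has_real_derivative ln x + (x+1)/x - 2) (at x)"
    using xp by (auto intro!: derivative_eq_intros simp: field_simps)
  have "ln (1/x) \<le> 1/x - 1" using ln_le_minus_one[of "1/x"] xp by simp
  hence "- ln x \<le> 1/x - 1" using xp by (simp add: ln_div)
  moreover have "(x+1)/x = 1 + 1/x" using xp by (simp add: field_simps)
  ultimately show "0 \<le> ln x + (x+1)/x - 2" by simp
qed (use assms in auto)

lemma g_nonneg:
  fixes x :: real assumes "0 < x"
  shows "3*(x-1)^2 \<le> (2*x+4)*(x*ln x - x + 1)"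
proof -
  define g where "g = (\<lambda>x::real. (2*x+4)*(x*ln x - x + 1) - 3*(x-1)^2)"
  have der: "(g has_real_derivative 4*((y+1)*ln y - 2*(y-1))) (at y)" if "y > 0" for y
    unfolding g_def using that
    by (auto intro!: derivative_eq_intros simp: field_simps power2_eq_square)
  have "g x \<ge> g 1"
  proof (cases "x \<ge> 1")
    case True
    show ?thesis
    proof (rule deriv_nonneg_imp_mono[OF der])
      fix y assume "y \<in> {1..x}"
      thus "0 \<le> 4*((y+1)*ln y - 2*(y-1))" using h_mono[of 1 y] by auto
    qed (use True in auto)
  next
    case False
    show ?thesis
    proof (rule deriv_nonpos_imp_antimono[OF der])
      fix y assume "y \<in> {x..1}"
      thus "4*((y+1)*ln y - 2*(y-1)) \<le> 0" using h_mono[of y 1] assms by auto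
    qed (use False assms in auto)
  qed
  moreover have "g 1 = 0" by (simp add: g_def)
  ultimately show ?thesis by (simp add: g_def)
qed

lemma pinsker:
  fixes p q :: "'a::finite \<Rightarrow> real"
  assumes pp: "\<And>a. p a > 0" and qp: "\<And>a. q a > 0"
    and ps: "(\<Sum>a\<in>UNIV. p a) = 1" and qs: "(\<Sum>a\<in>UNIV. q a) = 1"
  shows "(\<Sum>a\<in>UNIV. \<bar>p a - q a\<bar>)^2 \<le> 2 * (\<Sum>a\<in>UNIV. p a * ln (p a / q a))"
proof -
  define u where "u a = (2*p a + 4*q a)/3" for a
  define v where "v a = p a * ln (p a / q a) - p a + q a" for a
  have pt: "\<bar>p a - q a\<bar> \<le> sqrt (u a) * sqrt (v a)" for a
  proof -
    define x where "x = p a / q a"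
    have x: "x > 0" using pp qp by (simp add: x_def)
    have pa: "p a = x * q a" using qp[of a] by (simp add: x_def)
    have "3*(x-1)^2 * (q a)^2 \<le> (2*x+4)*(x*ln x - x + 1) * (q a)^2"
      using g_nonneg[OF x] by (simp add: mult_right_mono)
    have e1: "(p a - q a)^2 = (x-1)^2 * (q a)^2" by (simp add: pa power2_eq_square algebra_simps)
    have e2: "u a * v a = (2*x+4)*(x*ln x - x + 1) * (q a)^2 / 3"
    proof -
      have "u a = (2*x+4)*q a/3" unfolding u_def pa by (simp add: algebra_simps)
      moreover have "v a = q a*(x*ln x - x+1)" unfolding v_def x_def[symmetric] pa by (simp add: algebra_simps)
      ultimately have "u a * v a = ((2*x+4)*q a/3) * (q a*(x*ln x - x+1))" by (simp only:)
      thus ?thesis by (simp add: power2_eq_square field_simps)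
    qed
    hence "(p a - q a)^2 \<le> u a * v a"
      using \<open>3*(x-1)^2 * (q a)^2 \<le> _\<close> unfolding e1 e2 by simp
    moreover have "u a \<ge> 0" using pp[of a] qp[of a] by (simp add: u_def)
    moreover have "v a \<ge> 0"
    proof -
      have "(2*x+4)*(x*ln x - x + 1) \<ge> 0" using g_nonneg[OF x]
        by (smt (verit) zero_le_power2)
      hence "x*ln x - x + 1 \<ge> 0" using x by (simp add: zero_le_mult_iff)
      hence "q a * (x*ln x - x + 1) \<ge> 0" using qp[of a] by simp
      thus ?thesis unfolding v_def x_def[symmetric] pa by (simp add: algebra_simps)
    qed
    ultimately show ?thesis
      by (metis abs_ge_zero real_sqrt_abs real_sqrt_le_mono real_sqrt_mult)
  qed
  have "(\<Sum>a\<in>UNIV. \<bar>p a - q a\<bar>)^2 \<le> (\<Sum>a\<in>UNIV. sqrt (u a) * sqrt (v a))^2"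
    by (intro power_mono sum_mono pt) auto
  also have "\<dots> \<le> (\<Sum>a\<in>UNIV. (sqrt (u a))^2) * (\<Sum>a\<in>UNIV. (sqrt (v a))^2)"
    by (rule Cauchy_Schwarz_ineq_sum)
  also have "(\<Sum>a\<in>UNIV. (sqrt (u a))^2) = (\<Sum>a\<in>UNIV. u a)"
    using pp qp by (intro sum.cong) (auto simp: u_def less_imp_le)
  also have "\<dots> = 2" unfolding u_def using ps qs
    by (simp add: sum_divide_distrib[symmetric] sum.distrib sum_distrib_left[symmetric])
  also have "(\<Sum>a\<in>UNIV. (sqrt (v a))^2) = (\<Sum>a\<in>UNIV. v a)"
  proof (intro sum.cong refl)
    fix a
    define x where "x = p a / q a"
    have x: "x > 0" using pp qp by (simp add: x_def)
    have pa: "p a = x * q a" using qp[of a] by (simp add: x_def)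
    have "(2*x+4)*(x*ln x - x + 1) \<ge> 0" using g_nonneg[OF x]
      by (smt (verit) zero_le_power2)
    hence "x*ln x - x + 1 \<ge> 0" using x by (simp add: zero_le_mult_iff)
    hence "q a * (x*ln x - x + 1) \<ge> 0" using qp[of a] by simp
    hence "v a \<ge> 0" unfolding v_def x_def[symmetric] pa by (simp add: algebra_simps)
    thus "(sqrt (v a))^2 = v a" by simp
  qed
  also have "(\<Sum>a\<in>UNIV. v a) = (\<Sum>a\<in>UNIV. p a * ln (p a / q a))"
    unfolding v_def using ps qs by (simp add: sum.distrib sum_subtractf)
  finally show ?thesis .
qed

lemma loglin_facts:
  fixes phi :: "'s \<Rightarrow> 'a list \<Rightarrow> 'a::finite \<Rightarrow> real^'d::finite"
    and th :: "real^'d" and s :: 's and pre :: "'a list"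
  defines "Z \<equiv> (\<Sum>b\<in>UNIV. exp (phi s pre b \<bullet> th))"
  shows "Z > 0" "loglin phi th s pre a > 0"
    "ln (loglin phi th s pre a) = phi s pre a \<bullet> th - ln Z"
    "(\<Sum>a\<in>UNIV. loglin phi th s pre a) = 1"
proof -
  show Z: "Z > 0" unfolding Z_def by (intro sum_pos) auto
  show "loglin phi th s pre a > 0" using Z by (simp add: loglin_def Z_def[symmetric])
  show "ln (loglin phi th s pre a) = phi s pre a \<bullet> th - ln Z"
    using Z by (simp add: loglin_def Z_def[symmetric] ln_div)
  show "(\<Sum>a\<in>UNIV. loglin phi th s pre a) = 1"
    using Z by (simp add: loglin_def Z_def[symmetric] sum_divide_distrib[symmetric])
qed

theorem lemma7:
  fixes N m :: nat
    and G :: "('s::finite, 'a::finite) mgame"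
    and phi :: "'s \<Rightarrow> 'a list \<Rightarrow> 'a \<Rightarrow> real^'d::finite"
    and theta_k :: "nat \<Rightarrow> real^'d"
    and theta_next :: "real^'d"
    and beta :: real
    and pstar :: "('s, 'a) jpolicy"
    and s :: 's and pre :: "'a list"
  assumes "valid_game N G"
    and "1 \<le> m" and "m \<le> N"
    and "beta > 0"
    and "optimal_jpolicy N G pstar"
    and "length pre = m - 1"
  shows
    "KL (pstar m s pre) (loglin phi theta_next s pre) - KL (pstar m s pre) (loglin phi (theta_k m) s pre)
     \<le> ip (\<lambda>a. ln (loglin phi theta_next s pre a / ideal_update N G phi theta_k beta m s pre a))
           (\<lambda>a. loglin phi (theta_k m) s pre a - pstar m s pre a)
       + (1 / beta) * ip (Adv N G (loglin_joint phi theta_k) s pre)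
           (\<lambda>a. loglin phi (theta_k m) s pre a - pstar m s pre a)
       - (1 / 2) * (norm1 (\<lambda>a. loglin phi theta_next s pre a - loglin phi (theta_k m) s pre a))\<^sup>2
       - ip (\<lambda>a. (theta_next - theta_k m) \<bullet> phi s pre a)
           (\<lambda>a. loglin phi (theta_k m) s pre a - loglin phi theta_next s pre a)"
proof -
  define p where "p = pstar m s pre"
  define q where "q = loglin phi (theta_k m) s pre"
  define q' where "q' = loglin phi theta_next s pre"
  define r where "r = ideal_update N G phi theta_k beta m s pre"
  define Q where "Q a = Qpre N G (loglin_joint phi theta_k) s (pre @ [a])" for a
  define C where "C = Qpre N G (loglin_joint phi theta_k) s pre"
  define Zq where "Zq = (\<Sum>b\<in>UNIV. exp (phi s pre b \<bullet> theta_k m))"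
  define Zq' where "Zq' = (\<Sum>b\<in>UNIV. exp (phi s pre b \<bullet> theta_next))"
  define Zr where "Zr = (\<Sum>b\<in>UNIV. exp (Q b / beta + phi s pre b \<bullet> theta_k m))"
  define D where "D a = phi s pre a \<bullet> theta_next - phi s pre a \<bullet> theta_k m" for a
  have pd: "is_dist p" using assms(2,3,5,6) unfolding p_def optimal_jpolicy_def is_jpolicy_def by auto
  hence p0: "\<And>a. p a \<ge> 0" and ps: "(\<Sum>a\<in>UNIV. p a) = 1" by (auto simp: is_dist_def)
  have qp: "\<And>a. q a > 0" and lnq: "\<And>a. ln (q a) = phi s pre a \<bullet> theta_k m - ln Zq"
    and qs: "(\<Sum>a\<in>UNIV. q a) = 1" and Zq: "Zq > 0"
    using loglin_facts[where phi=phi and th="theta_k m" and s=s and pre=pre] by (auto simp: q_def Zq_def)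
  have q'p: "\<And>a. q' a > 0" and lnq': "\<And>a. ln (q' a) = phi s pre a \<bullet> theta_next - ln Zq'"
    and q's: "(\<Sum>a\<in>UNIV. q' a) = 1" and Zq': "Zq' > 0"
    using loglin_facts[where phi=phi and th=theta_next and s=s and pre=pre] by (auto simp: q'_def Zq'_def)
  have Zr: "Zr > 0" unfolding Zr_def by (intro sum_pos) auto
  have r_eq: "r a = exp (Q a / beta + phi s pre a \<bullet> theta_k m) / Zr" for a
    by (simp add: r_def ideal_update_def Let_def Q_def Zr_def)
  have rp: "r a > 0" for a using Zr by (simp add: r_eq)
  have lnr: "ln (r a) = Q a / beta + phi s pre a \<bullet> theta_k m - ln Zr" for a
    using Zr by (simp add: r_eq ln_div)
  have KLq: "KL p f = (\<Sum>a\<in>UNIV. p a * (ln (p a) - ln (f a)))" if "\<And>a. f a > 0" for f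
    unfolding KL_def
  proof (intro sum.cong refl)
    fix a show "(if p a = 0 then 0 else p a * ln (p a / f a)) = p a * (ln (p a) - ln (f a))"
      using p0[of a] that[of a] by (auto simp: ln_div)
  qed
  have LHS: "KL p q' - KL p q = (\<Sum>a\<in>UNIV. p a * (ln Zq' - ln Zq - D a))"
    unfolding KLq[OF q'p] KLq[OF qp] sum_subtractf[symmetric]
    by (intro sum.cong refl) (simp add: lnq lnq' D_def algebra_simps)
  have I1: "ip (\<lambda>a. ln (q' a / r a)) (\<lambda>a. q a - p a)
     = (\<Sum>a\<in>UNIV. (D a - ln Zq' + ln Zr - Q a / beta) * (q a - p a))"
    unfolding ip_def
  proof (intro sum.cong refl)
    fix a
    have e: "ln (q' a / r a) = ln (q' a) - ln (r a)" using q'p[of a] rp[of a] by (simp add: ln_div)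
    show "ln (q' a / r a) * (q a - p a) = (D a - ln Zq' + ln Zr - Q a / beta) * (q a - p a)"
      unfolding e lnq' lnr D_def by (simp add: algebra_simps)
  qed
  have I2: "ip (Adv N G (loglin_joint phi theta_k) s pre) (\<lambda>a. q a - p a)
     = (\<Sum>a\<in>UNIV. (Q a - C) * (q a - p a))"
    unfolding ip_def Adv_def Q_def C_def by simp
  have I3: "ip (\<lambda>a. (theta_next - theta_k m) \<bullet> phi s pre a) (\<lambda>a. q a - q' a)
     = (\<Sum>a\<in>UNIV. D a * (q a - q' a))"
    unfolding ip_def D_def by (simp add: inner_diff_left inner_commute)
  have KL2: "(\<Sum>a\<in>UNIV. q' a * ln (q' a / q a)) = (\<Sum>a\<in>UNIV. q' a * (D a - ln Zq' + ln Zq))"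
  proof (intro sum.cong refl)
    fix a
    have e: "ln (q' a / q a) = ln (q' a) - ln (q a)" using q'p[of a] qp[of a] by (simp add: ln_div)
    show "q' a * ln (q' a / q a) = q' a * (D a - ln Zq' + ln Zq)"
      unfolding e lnq' lnq D_def by (simp add: algebra_simps)
  qed
  have pins: "(norm1 (\<lambda>a. q' a - q a))\<^sup>2 \<le> 2 * (\<Sum>a\<in>UNIV. q' a * (D a - ln Zq' + ln Zq))"
    unfolding norm1_def KL2[symmetric] by (rule pinsker[OF q'p qp q's qs])
  have key: "(\<Sum>a\<in>UNIV. (D a - ln Zq' + ln Zr - Q a / beta) * (q a - p a))
      + (1/beta) * (\<Sum>a\<in>UNIV. (Q a - C) * (q a - p a))
      - (\<Sum>a\<in>UNIV. D a * (q a - q' a)) - (\<Sum>a\<in>UNIV. p a * (ln Zq' - ln Zq - D a))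
     = (\<Sum>a\<in>UNIV. q' a * (D a - ln Zq' + ln Zq))"
  proof -
    have "(\<Sum>a\<in>UNIV. (D a - ln Zq' + ln Zr - Q a / beta) * (q a - p a))
      + (1/beta) * (\<Sum>a\<in>UNIV. (Q a - C) * (q a - p a))
      - (\<Sum>a\<in>UNIV. D a * (q a - q' a)) - (\<Sum>a\<in>UNIV. p a * (ln Zq' - ln Zq - D a))
      = (\<Sum>a\<in>UNIV. (D a - ln Zq' + ln Zr - Q a / beta) * (q a - p a)
      + (1/beta) * ((Q a - C) * (q a - p a)) - D a * (q a - q' a) - p a * (ln Zq' - ln Zq - D a))"
      by (simp add: sum.distrib sum_subtractf sum_distrib_left)
    also have "\<dots> = (\<Sum>a\<in>UNIV. q' a * (D a - ln Zq' + ln Zq)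
          + ln Zr * (q a - p a) - C / beta * (q a - p a) + ln Zq * (p a - q' a) + ln Zq' * (q' a - q a))"
      using assms(4) by (intro sum.cong refl) (simp add: field_simps)
    also have "\<dots> = (\<Sum>a\<in>UNIV. q' a * (D a - ln Zq' + ln Zq))"
      using ps qs q's by (simp add: sum.distrib sum_subtractf right_diff_distrib
          sum_distrib_left[symmetric] sum_divide_distrib[symmetric])
    finally show ?thesis .
  qed
  show ?thesis
    unfolding p_def[symmetric] q_def[symmetric] q'_def[symmetric] r_def[symmetric]
    unfolding LHS I1 I2 I3
    using key pins by (simp add: abs_minus_commute)
qed
end
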